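(* Let $\rho_T$ be a T-state with $T=\mathrm{diag}(t_1,t_2,t_3)$ and $s_i=|t_i|$. If $s_1+s_2+s_3>\tfrac32$, then $\rho_T$ admits no local hidden state model for Bob and no local hidden state model for Alice; i.e., $\rho_T$ is EPR-steerable both by Alice and by Bob (using measurements of qubit observables $\boldsymbol u\cdot\boldsymbol\sigma$ by the steering party and projective measurements by the other).
   Context: $\boldsymbol\sigma=(\sigma_1,\sigma_2,\sigma_3)$ are the Pauli matrices. A T-state is $\rho_T=\frac14\big(\mathbb 1\otimes\mathbb 1+\sum_{j=1}^3 t_j\,\sigma_j\otimes\sigma_j\big)$ (assumed to be a valid density operator). A local hidden state (LHS) model for Bob means: there exist a probability distribution $P(\lambda)$, response probabilities $p(a|A,\lambda)$ for Alice's measurements, and qubit states $\rho_B(\lambda)$ such that $p(a,b|A,B)=\sum_\lambda P(\lambda)\,p(a|A,\lambda)\,\mathrm{tr}[\rho_B(\lambda)F^B_b]$ for all measurements $A$ of Alice and $B$ of Bob (with POVM $\{F^B_b\}$); an LHS model for Alice is defined symmetrically with the roles exchanged. A state is EPR-steerable by Alice (resp. Bob) if it has no LHS model for Bob (resp. Alice). *)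

theory Defs
  imports "HOL-Analysis.Analysis" "HOL-Probability.Probability"
begin

text \<open>Operators on a finite-dimensional Hilbert space with orthonormal basis indexed by 'n
  are represented as complex matrices of type complex^'n^'n.\<close>

definition qtrace :: "complex^'n^'n \<Rightarrow> complex" where
  "qtrace A = (\<Sum>i\<in>UNIV. A$i$i)"

definition density_op :: "complex^'n^'n \<Rightarrow> bool" where
  "density_op \<rho> \<longleftrightarrow>
     (\<forall>i j. \<rho>$i$j = cnj (\<rho>$j$i)) \<and>
     (\<forall>x::complex^'n. 0 \<le> Re (\<Sum>i\<in>UNIV. \<Sum>j\<in>UNIV. cnj (x$i) * \<rho>$i$j * x$j)) \<and>
     qtrace \<rho> = 1"

definition id2 :: "complex^2^2" where
  "id2 = (\<chi> i k. if i = k then 1 else 0)"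

text \<open>Pauli matrices sigma_1, sigma_2, sigma_3 (indexed by the elements 1,2,3 of type 3);
  basis vectors of the qubit are indexed by 1 and 2 of type 2.\<close>
definition pauli :: "3 \<Rightarrow> complex^2^2" where
  "pauli j =
     (if j = 1 then (\<chi> i k. if i \<noteq> k then 1 else 0)
      else if j = 2 then (\<chi> i k. if i = 1 \<and> k = 2 then - \<i> else if i = 2 \<and> k = 1 then \<i> else 0)
      else (\<chi> i k. if i = k then (if i = 1 then 1 else -1) else 0))"

definition kron :: "complex^2^2 \<Rightarrow> complex^2^2 \<Rightarrow> complex^(2\<times>2)^(2\<times>2)" where
  "kron A B = (\<chi> p q. A$(fst p)$(fst q) * B$(snd p)$(snd q))"

definition sigma_dot :: "real^3 \<Rightarrow> complex^2^2" where
  "sigma_dot u = (\<chi> i k. \<Sum>j\<in>UNIV. complex_of_real (u$j) * pauli j $ i $ k)"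

text \<open>Spectral projector of the observable u\<cdot>sigma (|u| = 1) for outcome a \<in> {-1,1}:
  (1 + a u\<cdot>sigma)/2.\<close>
definition proj :: "real^3 \<Rightarrow> int \<Rightarrow> complex^2^2" where
  "proj u a = (\<chi> i k. (id2$i$k + of_int a * sigma_dot u $i$k) / 2)"

definition T_state :: "real^3 \<Rightarrow> complex^(2\<times>2)^(2\<times>2)" where
  "T_state t = (\<chi> p q. (kron id2 id2 $p$q
        + (\<Sum>j\<in>UNIV. complex_of_real (t$j) * kron (pauli j) (pauli j) $p$q)) / 4)"

text \<open>Joint outcome probability p(a,b|u,v) = tr[rho (P^u_a \<otimes> P^v_b)] when Alice measures
  u\<cdot>sigma and Bob measures v\<cdot>sigma.\<close>
definition joint_prob :: "complex^(2\<times>2)^(2\<times>2) \<Rightarrow> real^3 \<Rightarrow> real^3 \<Rightarrow> int \<Rightarrow> int \<Rightarrow> real" where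
  "joint_prob \<rho> u v a b = Re (qtrace (\<rho> ** kron (proj u a) (proj v b)))"

definition outcomes :: "int set" where "outcomes = {-1, 1}"

text \<open>Local hidden state model for Bob (with hidden variables of type 'l, distributed
  according to a discrete probability distribution P): Alice's qubit-observable measurements
  u\<cdot>sigma (unit u) have response probabilities, Bob holds hidden states, and all joint
  statistics for Alice's u\<cdot>sigma and Bob's projective measurements v\<cdot>sigma are reproduced.\<close>
definition LHS_Bob :: "'l itself \<Rightarrow> complex^(2\<times>2)^(2\<times>2) \<Rightarrow> bool" where
  "LHS_Bob _ \<rho> \<longleftrightarrow>
    (\<exists>(P :: 'l pmf) (resp :: 'l \<Rightarrow> real^3 \<Rightarrow> int \<Rightarrow> real) (\<sigma> :: 'l \<Rightarrow> complex^2^2).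
       (\<forall>l u. norm u = 1 \<longrightarrow> (\<forall>a\<in>outcomes. 0 \<le> resp l u a) \<and> (\<Sum>a\<in>outcomes. resp l u a) = 1) \<and>
       (\<forall>l. density_op (\<sigma> l)) \<and>
       (\<forall>u v a b. norm u = 1 \<longrightarrow> norm v = 1 \<longrightarrow> a \<in> outcomes \<longrightarrow> b \<in> outcomes \<longrightarrow>
          joint_prob \<rho> u v a b =
            measure_pmf.expectation P (\<lambda>l. resp l u a * Re (qtrace (\<sigma> l ** proj v b)))))"

definition LHS_Alice :: "'l itself \<Rightarrow> complex^(2\<times>2)^(2\<times>2) \<Rightarrow> bool" where
  "LHS_Alice _ \<rho> \<longleftrightarrow>
    (\<exists>(P :: 'l pmf) (resp :: 'l \<Rightarrow> real^3 \<Rightarrow> int \<Rightarrow> real) (\<sigma> :: 'l \<Rightarrow> complex^2^2).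
       (\<forall>l v. norm v = 1 \<longrightarrow> (\<forall>b\<in>outcomes. 0 \<le> resp l v b) \<and> (\<Sum>b\<in>outcomes. resp l v b) = 1) \<and>
       (\<forall>l. density_op (\<sigma> l)) \<and>
       (\<forall>u v a b. norm u = 1 \<longrightarrow> norm v = 1 \<longrightarrow> a \<in> outcomes \<longrightarrow> b \<in> outcomes \<longrightarrow>
          joint_prob \<rho> u v a b =
            measure_pmf.expectation P (\<lambda>l. Re (qtrace (\<sigma> l ** proj u a)) * resp l v b)))"

end

theory Submission
  imports Defs "HOL-Real_Asymp.Real_Asymp"
begin

lemma sum_UNIV_22: "(\<Sum>p\<in>(UNIV::(2\<times>2) set). f p) = (\<Sum>i\<in>UNIV. \<Sum>k\<in>UNIV. f (i,k))"
  unfolding sum.cartesian_product UNIV_Times_UNIV case_prod_eta ..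

lemma qtrace_kron: "qtrace (kron A B ** kron C D) = qtrace (A ** C) * qtrace (B ** D)"
  unfolding qtrace_def kron_def matrix_matrix_mult_def
  by (simp add: sum_UNIV_22 sum_2 algebra_simps)

lemma pauli_entries:
  "pauli 1 $ 1 $ 1 = 0" "pauli 1 $ 1 $ 2 = 1" "pauli 1 $ 2 $ 1 = 1" "pauli 1 $ 2 $ 2 = 0"
  "pauli 2 $ 1 $ 1 = 0" "pauli 2 $ 1 $ 2 = -\<i>" "pauli 2 $ 2 $ 1 = \<i>" "pauli 2 $ 2 $ 2 = 0"
  "pauli 3 $ 1 $ 1 = 1" "pauli 3 $ 1 $ 2 = 0" "pauli 3 $ 2 $ 1 = 0" "pauli 3 $ 2 $ 2 = -1"
  by (simp_all add: pauli_def)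

lemma id2_entries: "id2 $ 1 $ 1 = 1" "id2 $ 1 $ 2 = 0" "id2 $ 2 $ 1 = 0" "id2 $ 2 $ 2 = 1"
  by (simp_all add: id2_def)

lemma qtrace_mult_proj: "qtrace (X ** proj u a) = (qtrace X + of_int a * (\<Sum>j\<in>UNIV. of_real (u$j) * qtrace (X ** pauli j))) / 2"
  unfolding qtrace_def matrix_matrix_mult_def proj_def sigma_dot_def
  by (simp add: sum_2 sum_3 pauli_entries id2_entries algebra_simps add_divide_distrib)

lemma qtrace_mult: "qtrace (X ** K) = (\<Sum>p\<in>UNIV. \<Sum>q\<in>UNIV. X$p$q * K$q$p)"
  unfolding qtrace_def matrix_matrix_mult_def by simp

lemma qtrace_pauli_pauli: "qtrace (pauli j ** pauli k) = (if j = k then 2 else 0)"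
  unfolding qtrace_mult using exhaust_3[of j] exhaust_3[of k]
  by (auto simp: sum_2 pauli_entries)

lemma qtrace_id2_mult: "qtrace (id2 ** X) = qtrace X"
  unfolding qtrace_def matrix_matrix_mult_def by (simp add: sum_2 id2_entries)

lemma qtrace_pauli0: "qtrace (pauli j) = 0" unfolding qtrace_def using exhaust_3[of j]
    by (auto simp: sum_2 pauli_entries)

lemma qtrace_id2: "qtrace id2 = 2" unfolding qtrace_def by (simp add: sum_2 id2_entries)

lemma qtrace_proj: "qtrace (proj u a) = 1"
proof -
  have "qtrace (proj u a) = qtrace (id2 ** proj u a)" by (simp add: qtrace_id2_mult)
  also have "\<dots> = 1" unfolding qtrace_mult_proj
    by (simp add: qtrace_id2_mult qtrace_pauli0 qtrace_id2)
  finally show ?thesis .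
qed

lemma qtrace_pauli_proj: "qtrace (pauli j ** proj u a) = of_int a * of_real (u$j)"
proof -
  have "qtrace (pauli j ** proj u a) = (qtrace (pauli j) + of_int a * (\<Sum>k\<in>UNIV. of_real (u$k) * (if j = k then 2 else 0))) / 2"
    unfolding qtrace_mult_proj qtrace_pauli_pauli by simp
  moreover have "qtrace (pauli j) = 0" unfolding qtrace_def using exhaust_3[of j]
    by (auto simp: sum_2 pauli_entries)
  ultimately show ?thesis by (simp add: if_distrib[where f="\<lambda>x. _ * x"] cong: if_cong)
qed

lemma sum3_swap: "(\<Sum>p\<in>A. \<Sum>q\<in>B. \<Sum>j\<in>C. f p q j) = (\<Sum>j\<in>C. \<Sum>p\<in>A. \<Sum>q\<in>B. f p q j)"
proof -
  have e: "(\<Sum>q\<in>B. \<Sum>j\<in>C. f p q j) = (\<Sum>j\<in>C. \<Sum>q\<in>B. f p q j)" for p by (rule sum.swap)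
  have "(\<Sum>p\<in>A. \<Sum>q\<in>B. \<Sum>j\<in>C. f p q j) = (\<Sum>p\<in>A. \<Sum>j\<in>C. \<Sum>q\<in>B. f p q j)" by (simp only: e)
  also have "\<dots> = (\<Sum>j\<in>C. \<Sum>p\<in>A. \<Sum>q\<in>B. f p q j)" by (rule sum.swap)
  finally show ?thesis .
qed

lemma aux_distr: "((a + (\<Sum>j\<in>C. x j * y j)) / 4) * (k::complex) = (a*k + (\<Sum>j\<in>C. x j * (y j * k))) / 4"
  by (simp add: sum_distrib_right mult.assoc ring_distribs)

lemma qtrace_T_mult: "qtrace (T_state t ** K) =
   (qtrace (kron id2 id2 ** K) + (\<Sum>j\<in>UNIV. of_real (t$j) * qtrace (kron (pauli j) (pauli j) ** K))) / 4"
proof -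
  have "qtrace (T_state t ** K) = (\<Sum>p\<in>UNIV. \<Sum>q\<in>UNIV. (kron id2 id2 $p$q * K$q$p
      + (\<Sum>j\<in>UNIV. of_real (t$j) * (kron (pauli j) (pauli j) $p$q * K$q$p))) / 4)"
    unfolding qtrace_mult T_state_def vec_lambda_beta aux_distr ..
  also have "\<dots> = ((\<Sum>p\<in>UNIV. \<Sum>q\<in>UNIV. kron id2 id2 $p$q * K$q$p)
      + (\<Sum>p\<in>UNIV. \<Sum>q\<in>UNIV. \<Sum>j\<in>UNIV. of_real (t$j) * (kron (pauli j) (pauli j) $p$q * K$q$p))) / 4"
    by (simp add: sum_divide_distrib[symmetric] sum.distrib)
  also have "\<dots> = (qtrace (kron id2 id2 ** K) + (\<Sum>j\<in>UNIV. of_real (t$j) * qtrace (kron (pauli j) (pauli j) ** K))) / 4"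
    by (subst sum3_swap) (simp add: qtrace_mult sum_distrib_left)
  finally show ?thesis .
qed


lemma joint_prob_T: "joint_prob (T_state t) u v a b = (1 + of_int (a*b) * (\<Sum>j\<in>UNIV. t$j * u$j * v$j)) / 4"
proof -
  have "qtrace (T_state t ** kron (proj u a) (proj v b)) =
     (1 + (\<Sum>j\<in>UNIV. of_real (t$j) * ((of_int a * of_real (u$j)) * (of_int b * of_real (v$j))))) / 4"
    unfolding qtrace_T_mult qtrace_kron qtrace_id2_mult qtrace_proj qtrace_pauli_proj by simp
  also have "\<dots> = of_real ((1 + of_int (a*b) * (\<Sum>j\<in>UNIV. t$j * u$j * v$j)) / 4)"
    by (simp add: sum_distrib_left algebra_simps)
  finally show ?thesis unfolding joint_prob_def by (metis Re_complex_of_real)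
qed

definition bloch :: "complex^2^2 \<Rightarrow> real^3" where
  "bloch \<sigma> = (\<chi> j. Re (qtrace (\<sigma> ** pauli j)))"

lemma Re_qtrace_proj:
  assumes "density_op \<sigma>"
  shows "Re (qtrace (\<sigma> ** proj v b)) = (1 + of_int b * (bloch \<sigma> \<bullet> v)) / 2"
proof -
  have tr: "qtrace \<sigma> = 1" using assms unfolding density_op_def by simp
  have "Re (qtrace (\<sigma> ** proj v b)) = Re ((1 + of_int b * (\<Sum>j\<in>UNIV. of_real (v$j) * qtrace (\<sigma> ** pauli j))) / 2)"
    unfolding qtrace_mult_proj tr ..
  also have "\<dots> = (1 + of_int b * (\<Sum>j\<in>UNIV. v$j * Re (qtrace (\<sigma> ** pauli j)))) / 2"
    by (simp add: Re_sum)
  also have "\<dots> = (1 + of_int b * (bloch \<sigma> \<bullet> v)) / 2"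
    by (simp add: bloch_def inner_vec_def mult.commute)
  finally show ?thesis .
qed

lemma bloch_norm:
  assumes "density_op \<sigma>"
  shows "norm (bloch \<sigma>) \<le> 1"
proof -
  define a where "a = \<sigma>$1$1"
  define b where "b = \<sigma>$1$2"
  define d where "d = \<sigma>$2$2"
  have herm: "\<And>i j. \<sigma>$i$j = cnj (\<sigma>$j$i)" and psd: "\<And>x::complex^2. 0 \<le> Re (\<Sum>i\<in>UNIV. \<Sum>j\<in>UNIV. cnj (x$i) * \<sigma>$i$j * x$j)"
    and tr: "qtrace \<sigma> = 1" using assms unfolding density_op_def by blast+
  have c: "\<sigma>$2$1 = cnj b" using herm[of 2 1] b_def by simp
  have ia: "Im a = 0" using herm[of 1 1] a_def by (simp add: complex_eq_iff)
  have id: "Im d = 0" using herm[of 2 2] d_def by (simp add: complex_eq_iff)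
  have trr: "Re a + Re d = 1" using tr unfolding qtrace_def a_def d_def by (simp add: sum_2 complex_eq_iff)
  define p where "p = Re a"
  define q where "q = Re d"
  have a': "a = of_real p" using ia p_def by (simp add: complex_eq_iff)
  have d': "d = of_real q" using id q_def by (simp add: complex_eq_iff)
  define x where "x = Re b"
  define y where "y = Im b"
  have Q: "Re (\<Sum>i\<in>UNIV. \<Sum>j\<in>UNIV. cnj (z$i) * \<sigma>$i$j * z$j) =
     Re (cnj (z$1) * a * z$1 + cnj (z$1) * b * z$2 + cnj (z$2) * cnj b * z$1 + cnj (z$2) * d * z$2)" for z :: "complex^2"
    by (simp add: sum_2 a_def b_def d_def c)
  have 1: "0 \<le> p * (p*q - (x^2 + y^2))"
    using psd[of "\<chi> i. if i = 1 then - b else of_real p"] unfolding Q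
    by (simp add: a' d' x_def y_def algebra_simps power2_eq_square)
  have 2: "0 \<le> q * (p*q - (x^2 + y^2))"
    using psd[of "\<chi> i. if i = 1 then of_real q else - cnj b"] unfolding Q
    by (simp add: a' d' x_def y_def algebra_simps power2_eq_square)
  have 3: "x^2 + y^2 \<le> p*q" using 1 2 trr p_def q_def
    by (smt (verit) distrib_right mult_cancel_right2)
  have bl: "bloch \<sigma> $ 1 = 2*x" "bloch \<sigma> $ 2 = -2*y" "bloch \<sigma> $ 3 = p - q"
    unfolding bloch_def qtrace_mult by (simp_all add: sum_2 pauli_entries a_def[symmetric] b_def[symmetric] d_def[symmetric] c x_def y_def p_def q_def)
  have "(norm (bloch \<sigma>))^2 = (2*x)^2 + (-2*y)^2 + (p-q)^2"
    unfolding power2_norm_eq_inner inner_vec_def sum_3 bl by (simp add: power2_eq_square)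
  also have "\<dots> \<le> (p+q)^2" using 3 by (simp add: power2_eq_square algebra_simps)
  also have "\<dots> = 1" using trr p_def q_def by simp
  finally show ?thesis by (simp add: power_le_one_iff abs_le_square_iff)
qed

lemma pmf_integrable_bdd:
  fixes f :: "'l \<Rightarrow> real"
  assumes "\<And>l. \<bar>f l\<bar> \<le> B"
  shows "integrable (measure_pmf P) f"
  by (rule measure_pmf.integrable_const_bound[where B=B]) (use assms in auto)

lemma resp_bounds1:
  fixes R :: "int \<Rightarrow> real"
  assumes "\<forall>a\<in>outcomes. 0 \<le> R a" "(\<Sum>a\<in>outcomes. R a) = 1" "a \<in> outcomes"
  shows "\<bar>R a\<bar> \<le> 1"
  using assms by (auto simp: outcomes_def abs_le_iff)

lemma resp_bounds2:
  fixes R :: "int \<Rightarrow> real"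
  assumes "\<forall>a\<in>outcomes. 0 \<le> R a" "(\<Sum>a\<in>outcomes. R a) = 1"
  shows "\<bar>R 1 - R (-1)\<bar> \<le> 1"
  using assms by (auto simp: outcomes_def abs_le_iff)

lemma proj_term_bound:
  assumes "norm r \<le> 1" "norm v = 1" "b \<in> outcomes"
  shows "\<bar>(1 + of_int b * (r \<bullet> v)) / 2\<bar> \<le> 1"
proof -
  have "\<bar>r \<bullet> v\<bar> \<le> 1" using Cauchy_Schwarz_ineq2[of r v] assms by simp
  then show ?thesis using assms(3) by (auto simp: outcomes_def)
qed

lemma corr_from_probs:
  fixes F :: "int \<Rightarrow> int \<Rightarrow> 'l \<Rightarrow> real"
  assumes jp: "\<And>a b. a \<in> outcomes \<Longrightarrow> b \<in> outcomes \<Longrightarrow> (1 + of_int (a*b) * c) / 4 = measure_pmf.expectation P (F a b)"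
    and bd: "\<And>a b l. a \<in> outcomes \<Longrightarrow> b \<in> outcomes \<Longrightarrow> \<bar>F a b l\<bar> \<le> 1"
  shows "c = measure_pmf.expectation P (\<lambda>l. F 1 1 l - F 1 (-1) l - F (-1) 1 l + F (-1) (-1) l)"
proof -
  have o: "1 \<in> outcomes" "-1 \<in> outcomes" by (auto simp: outcomes_def)
  have i: "integrable (measure_pmf P) (F a b)" if "a \<in> outcomes" "b \<in> outcomes" for a b
    using bd[OF that] by (rule pmf_integrable_bdd)
  have e: "measure_pmf.expectation P (F 1 1) = (1 + c)/4" "measure_pmf.expectation P (F 1 (-1)) = (1 - c)/4"
     "measure_pmf.expectation P (F (-1) 1) = (1 - c)/4" "measure_pmf.expectation P (F (-1) (-1)) = (1 + c)/4"
    using jp[of 1 1] jp[of 1 "-1"] jp[of "-1" 1] jp[of "-1" "-1"] o by simp_all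
  have "c = measure_pmf.expectation P (F 1 1) - measure_pmf.expectation P (F 1 (-1)) - measure_pmf.expectation P (F (-1) 1) + measure_pmf.expectation P (F (-1) (-1))"
    unfolding e by (simp add: field_simps)
  also have "\<dots> = measure_pmf.expectation P (\<lambda>l. F 1 1 l - F 1 (-1) l - F (-1) 1 l + F (-1) (-1) l)"
    using i o by simp
  finally show ?thesis .
qed

lemma LHS_Bob_corr:
  assumes "LHS_Bob TYPE('l) (T_state t)"
  shows "\<exists>(P::'l pmf) A r. (\<forall>l u. norm u = 1 \<longrightarrow> \<bar>A l u\<bar> \<le> 1) \<and> (\<forall>l. norm (r l) \<le> 1) \<and>
     (\<forall>u v. norm u = 1 \<longrightarrow> norm v = 1 \<longrightarrow> (\<Sum>j\<in>UNIV. t$j * u$j * v$j) = measure_pmf.expectation P (\<lambda>l. A l u * (r l \<bullet> v)))"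
proof -
  obtain P :: "'l pmf" and resp :: "'l \<Rightarrow> real^3 \<Rightarrow> int \<Rightarrow> real" and \<sigma> where
    R: "\<forall>l u. norm u = 1 \<longrightarrow> (\<forall>a\<in>outcomes. 0 \<le> resp l u a) \<and> (\<Sum>a\<in>outcomes. resp l u a) = 1" and
    D: "\<forall>l. density_op (\<sigma> l)" and
    J: "\<forall>u v a b. norm u = 1 \<longrightarrow> norm v = 1 \<longrightarrow> a \<in> outcomes \<longrightarrow> b \<in> outcomes \<longrightarrow>
          joint_prob (T_state t) u v a b = measure_pmf.expectation P (\<lambda>l. resp l u a * Re (qtrace (\<sigma> l ** proj v b)))"
    using assms unfolding LHS_Bob_def by blast
  define A where "A l u = resp l u 1 - resp l u (-1)" for l u
  define r where "r l = bloch (\<sigma> l)" for l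
  have rn: "norm (r l) \<le> 1" for l using D bloch_norm r_def by auto
  show ?thesis
  proof (intro exI conjI allI impI)
    show "\<bar>A l u\<bar> \<le> 1" if "norm u = 1" for l u
      using R that resp_bounds2[of "resp l u"] A_def by auto
    show "norm (r l) \<le> 1" for l by (rule rn)
    fix u v :: "real^3" assume u: "norm u = 1" and v: "norm v = 1"
    define F where "F a b l = resp l u a * ((1 + of_int b * (r l \<bullet> v)) / 2)" for a b l
    have "(\<Sum>j\<in>UNIV. t$j * u$j * v$j) = measure_pmf.expectation P (\<lambda>l. F 1 1 l - F 1 (-1) l - F (-1) 1 l + F (-1) (-1) l)"
    proof (rule corr_from_probs)
      fix a b assume ab: "a \<in> outcomes" "b \<in> outcomes"
      show "(1 + of_int (a*b) * (\<Sum>j\<in>UNIV. t$j * u$j * v$j)) / 4 = measure_pmf.expectation P (F a b)"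
        using J u v ab D unfolding joint_prob_T F_def r_def by (simp add: Re_qtrace_proj)
      fix l
      have h1: "\<bar>resp l u a\<bar> \<le> 1" using R u resp_bounds1[of "resp l u" a] ab by auto
      have h2: "\<bar>(1 + of_int b * (r l \<bullet> v)) / 2\<bar> \<le> 1" using proj_term_bound[OF rn v ab(2)] .
      show "\<bar>F a b l\<bar> \<le> 1" unfolding F_def abs_mult by (rule order_trans[OF mult_mono[OF h1 h2]]) simp_all
    qed
    also have "\<dots> = measure_pmf.expectation P (\<lambda>l. A l u * (r l \<bullet> v))"
      by (rule Bochner_Integration.integral_cong) (auto simp: F_def A_def field_simps)
    finally show "(\<Sum>j\<in>UNIV. t$j * u$j * v$j) = measure_pmf.expectation P (\<lambda>l. A l u * (r l \<bullet> v))" .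
  qed
qed

lemma LHS_Alice_corr:
  assumes "LHS_Alice TYPE('l) (T_state t)"
  shows "\<exists>(P::'l pmf) A r. (\<forall>l u. norm u = 1 \<longrightarrow> \<bar>A l u\<bar> \<le> 1) \<and> (\<forall>l. norm (r l) \<le> 1) \<and>
     (\<forall>u v. norm u = 1 \<longrightarrow> norm v = 1 \<longrightarrow> (\<Sum>j\<in>UNIV. t$j * u$j * v$j) = measure_pmf.expectation P (\<lambda>l. A l u * (r l \<bullet> v)))"
proof -
  obtain P :: "'l pmf" and resp :: "'l \<Rightarrow> real^3 \<Rightarrow> int \<Rightarrow> real" and \<sigma> where
    R: "\<forall>l v. norm v = 1 \<longrightarrow> (\<forall>b\<in>outcomes. 0 \<le> resp l v b) \<and> (\<Sum>b\<in>outcomes. resp l v b) = 1" and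
    D: "\<forall>l. density_op (\<sigma> l)" and
    J: "\<forall>u v a b. norm u = 1 \<longrightarrow> norm v = 1 \<longrightarrow> a \<in> outcomes \<longrightarrow> b \<in> outcomes \<longrightarrow>
          joint_prob (T_state t) u v a b = measure_pmf.expectation P (\<lambda>l. Re (qtrace (\<sigma> l ** proj u a)) * resp l v b)"
    using assms unfolding LHS_Alice_def by blast
  define A where "A l u = resp l u 1 - resp l u (-1)" for l u
  define r where "r l = bloch (\<sigma> l)" for l
  have rn: "norm (r l) \<le> 1" for l using D bloch_norm r_def by auto
  show ?thesis
  proof (intro exI conjI allI impI)
    show "\<bar>A l u\<bar> \<le> 1" if "norm u = 1" for l u
      using R that resp_bounds2[of "resp l u"] A_def by auto
    show "norm (r l) \<le> 1" for l by (rule rn)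
    fix u v :: "real^3" assume u: "norm u = 1" and v: "norm v = 1"
    define F where "F a b l = resp l u b * ((1 + of_int a * (r l \<bullet> v)) / 2)" for a b l
    have "(\<Sum>j\<in>UNIV. t$j * u$j * v$j) = measure_pmf.expectation P (\<lambda>l. F 1 1 l - F 1 (-1) l - F (-1) 1 l + F (-1) (-1) l)"
    proof (rule corr_from_probs)
      fix a b assume ab: "a \<in> outcomes" "b \<in> outcomes"
      have "joint_prob (T_state t) v u a b = measure_pmf.expectation P (F a b)"
        using J u v ab D unfolding F_def r_def by (simp add: Re_qtrace_proj mult.commute)
      then show "(1 + of_int (a*b) * (\<Sum>j\<in>UNIV. t$j * u$j * v$j)) / 4 = measure_pmf.expectation P (F a b)"
        unfolding joint_prob_T by (simp add: mult.commute mult.left_commute)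
      fix l
      have h1: "\<bar>resp l u b\<bar> \<le> 1" using R u resp_bounds1[of "resp l u" b] ab by auto
      have h2: "\<bar>(1 + of_int a * (r l \<bullet> v)) / 2\<bar> \<le> 1" using proj_term_bound[OF rn v ab(1)] .
      show "\<bar>F a b l\<bar> \<le> 1" unfolding F_def abs_mult by (rule order_trans[OF mult_mono[OF h1 h2]]) simp_all
    qed
    also have "\<dots> = measure_pmf.expectation P (\<lambda>l. A l u * (r l \<bullet> v))"
      by (rule Bochner_Integration.integral_cong) (auto simp: F_def A_def field_simps)
    finally show "(\<Sum>j\<in>UNIV. t$j * u$j * v$j) = measure_pmf.expectation P (\<lambda>l. A l u * (r l \<bullet> v))" .
  qed
qed

lemma hb_nn:
  assumes "has_bochner_integral M f x" "\<And>y. 0 \<le> f y"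
  shows "(\<integral>\<^sup>+y. ennreal (f y) \<partial>M) = ennreal x"
proof -
  have "integrable M f" using assms(1) by (auto simp: integrable.simps)
  then show ?thesis using assms nn_integral_eq_integral[of M f] has_bochner_integral_integral_eq by auto
qed

lemma std_scaled_eq:
  fixes s x :: real
  defines "\<sigma> \<equiv> 1 / sqrt (1 + s\<^sup>2)"
  shows "std_normal_density x * exp (-(s*x)\<^sup>2/2) = \<sigma> * normal_density 0 \<sigma> x"
proof -
  have c: "1 + s\<^sup>2 > 0" by (simp add: add_pos_nonneg)
  have s2: "\<sigma>\<^sup>2 = 1 / (1 + s\<^sup>2)" unfolding \<sigma>_def using c by (simp add: power_divide)
  have "\<sigma> * (1 / sqrt (2 * pi * \<sigma>\<^sup>2)) = 1 / sqrt (2*pi)"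
    unfolding \<sigma>_def using c by (simp add: real_sqrt_mult real_sqrt_divide power_divide field_simps)
  moreover have "exp (-(x - 0)\<^sup>2/ (2 * \<sigma>\<^sup>2)) = exp (-(x - 0)\<^sup>2/ (2 * 1\<^sup>2)) * exp (-(s*x)\<^sup>2/2)"
    unfolding s2 exp_add[symmetric] using c by (simp add: field_simps power_mult_distrib)
  ultimately show ?thesis unfolding normal_density_def by (simp add: field_simps)
qed

lemma gauss_1d_0:
  "(\<integral>\<^sup>+x. ennreal (std_normal_density x * exp (-(s*x)\<^sup>2/2)) \<partial>lborel) = ennreal (1 / sqrt (1 + s\<^sup>2))"
proof -
  define \<sigma> where "\<sigma> = 1 / sqrt (1 + s\<^sup>2)"
  have sp: "\<sigma> > 0" unfolding \<sigma>_def by (simp add: add_pos_nonneg)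
  have "has_bochner_integral lborel (\<lambda>x. normal_density 0 \<sigma> x * (x - 0) ^ (2 * 0)) (fact (2 * 0) / ((2 / \<sigma>\<^sup>2)^0 * fact 0))"
    by (rule normal_moment_even) (rule sp)
  then have "has_bochner_integral lborel (\<lambda>x. \<sigma> * normal_density 0 \<sigma> x) (\<sigma> * 1)"
    by (intro has_bochner_integral_mult_right) (use sp in simp)
  moreover have "(\<lambda>x. std_normal_density x * exp (-(s*x)\<^sup>2/2)) = (\<lambda>x. \<sigma> * normal_density 0 \<sigma> x)"
    by (intro ext) (simp only: std_scaled_eq \<sigma>_def)
  ultimately have "has_bochner_integral lborel (\<lambda>x. std_normal_density x * exp (-(s*x)\<^sup>2/2)) \<sigma>"
    by simp
  then show ?thesis unfolding \<sigma>_def by (rule hb_nn) simp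
qed

lemma gauss_1d_2:
  "(\<integral>\<^sup>+x. ennreal (std_normal_density x * exp (-(s*x)\<^sup>2/2) * x\<^sup>2) \<partial>lborel) = ennreal ((1 / sqrt (1 + s\<^sup>2))^3)"
proof -
  define \<sigma> where "\<sigma> = 1 / sqrt (1 + s\<^sup>2)"
  have sp: "\<sigma> > 0" unfolding \<sigma>_def by (simp add: add_pos_nonneg)
  have "has_bochner_integral lborel (\<lambda>x. normal_density 0 \<sigma> x * (x - 0) ^ (2 * 1)) (fact (2 * 1) / ((2 / \<sigma>\<^sup>2)^1 * fact 1))"
    by (rule normal_moment_even) (rule sp)
  then have "has_bochner_integral lborel (\<lambda>x. \<sigma> * (normal_density 0 \<sigma> x * x\<^sup>2)) (\<sigma> * \<sigma>\<^sup>2)"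
    by (intro has_bochner_integral_mult_right) (use sp in simp)
  moreover have "(\<lambda>x. std_normal_density x * exp (-(s*x)\<^sup>2/2) * x\<^sup>2) = (\<lambda>x. \<sigma> * (normal_density 0 \<sigma> x * x\<^sup>2))"
    by (intro ext) (simp only: std_scaled_eq \<sigma>_def mult.assoc)
  moreover have "\<sigma> * \<sigma>\<^sup>2 = \<sigma>^3" by (simp add: power3_eq_cube power2_eq_square)
  ultimately have "has_bochner_integral lborel (\<lambda>x. std_normal_density x * exp (-(s*x)\<^sup>2/2) * x\<^sup>2) (\<sigma>^3)"
    by simp
  then show ?thesis unfolding \<sigma>_def by (rule hb_nn) simp
qed

lemma gauss_1d_abs:
  "(\<integral>\<^sup>+x. ennreal (std_normal_density x * \<bar>x\<bar>) \<partial>lborel) = ennreal (sqrt (2 / pi))"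
  using std_normal_moment_abs_odd[of 0] by (intro hb_nn) auto

lemma gauss_1d_one:
  "(\<integral>\<^sup>+x. ennreal (std_normal_density x) \<partial>lborel) = 1"
  using std_normal_moment_even[of 0] hb_nn[of lborel std_normal_density 1] by simp

lemma inv_rep:
  fixes a :: real assumes a: "a > 0"
  shows "(\<integral>\<^sup>+s. ennreal (indicator {0..} s * exp (-(s*a)\<^sup>2/2)) \<partial>lborel) = ennreal (sqrt (pi/2) / a)"
proof -
  define c where "c = a / sqrt 2"
  have c: "c > 0" using a by (simp add: c_def)
  have g: "(\<integral>\<^sup>+x. ennreal (indicator {0..} x * exp (-x\<^sup>2)) \<partial>lborel) = ennreal (sqrt pi / 2)"
    using gaussian_moment_0 by (intro hb_nn) auto
  have "(\<integral>\<^sup>+x. ennreal (indicator {0..} x * exp (-x\<^sup>2)) \<partial>lborel)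
      = \<bar>c\<bar> * (\<integral>\<^sup>+x. ennreal (indicator {0..} (0 + c*x) * exp (-(0 + c*x)\<^sup>2)) \<partial>lborel)"
    by (rule nn_integral_real_affine) (use c in auto)
  also have "(\<lambda>x. ennreal (indicator {0..} (0 + c*x) * exp (-(0 + c*x)\<^sup>2))) = (\<lambda>x. ennreal (indicator {0..} x * exp (-(x*a)\<^sup>2/2)))"
  proof (intro ext)
    fix x
    have "indicator {0..} (c*x) = (indicator {0..} x :: real)" using c by (auto simp: indicator_def zero_le_mult_iff)
    moreover have "(c*x)\<^sup>2 = (x*a)\<^sup>2/2" by (simp add: c_def power_mult_distrib power_divide)
    ultimately show "ennreal (indicator {0..} (0 + c*x) * exp (-(0 + c*x)\<^sup>2)) = ennreal (indicator {0..} x * exp (-(x*a)\<^sup>2/2))"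
      by simp
  qed
  finally have "ennreal (sqrt pi / 2) = ennreal c * (\<integral>\<^sup>+s. ennreal (indicator {0..} s * exp (-(s*a)\<^sup>2/2)) \<partial>lborel)"
    using g c by simp
  then have "ennreal (1/c) * ennreal (sqrt pi / 2) = ennreal (1/c) * ennreal c * (\<integral>\<^sup>+s. ennreal (indicator {0..} s * exp (-(s*a)\<^sup>2/2)) \<partial>lborel)"
    by (simp add: mult.assoc)
  also have "ennreal (1/c) * ennreal c = 1" using c by (simp add: ennreal_mult[symmetric])
  finally have "(\<integral>\<^sup>+s. ennreal (indicator {0..} s * exp (-(s*a)\<^sup>2/2)) \<partial>lborel) = ennreal (1/c) * ennreal (sqrt pi / 2)"
    by simp
  also have "\<dots> = ennreal (1/c * (sqrt pi / 2))" using c by (intro ennreal_mult[symmetric]) auto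
  also have "1/c * (sqrt pi / 2) = sqrt (pi/2) / a"
    using a by (simp add: c_def real_sqrt_divide field_simps)
  finally show ?thesis .
qed

lemma DERIV_F5: "DERIV (\<lambda>y::real. y * (2 * y^2 + 3) / (3 * (sqrt (1 + y^2))^3)) x :> (1 / sqrt (1 + x^2))^5"
proof -
  define w where "w = sqrt (1 + x^2)"
  have p: "0 < 1 + x^2" by (simp add: add_pos_nonneg)
  have w: "w > 0" "w^2 = 1 + x^2" using p by (auto simp: w_def)
  have q: "DERIV (\<lambda>y. 1 + y^2) x :> 2*x" by (auto intro!: derivative_eq_intros)
  have s: "DERIV (\<lambda>y. sqrt (1 + y^2)) x :> inverse (sqrt (1 + x^2)) / 2 * (2*x)"
    by (rule DERIV_chain2[OF DERIV_real_sqrt q]) (rule p)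
  have d1: "DERIV (\<lambda>y. y * (2 * y^2 + 3)) x :> 6*x^2 + 3"
    by (auto intro!: derivative_eq_intros simp: algebra_simps power2_eq_square)
  have d2: "DERIV (\<lambda>y. 3 * (sqrt (1 + y^2))^3) x :> 3 * (of_nat 3 * (sqrt (1 + x^2))^(3 - 1) * (inverse (sqrt (1 + x^2)) / 2 * (2*x)))"
    using DERIV_cmult[OF DERIV_chain2[OF DERIV_pow[of 3] s], of 3] by simp
  have d: "DERIV (\<lambda>y. y * (2 * y^2 + 3) / (3 * (sqrt (1 + y^2))^3)) x :>
      ((6*x^2 + 3) * (3 * (sqrt (1 + x^2))^3) - (x * (2 * x^2 + 3)) * (3 * (of_nat 3 * (sqrt (1 + x^2))^(3 - 1) * (inverse (sqrt (1 + x^2)) / 2 * (2*x)))))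
       / ((3 * (sqrt (1 + x^2))^3) * (3 * (sqrt (1 + x^2))^3))"
    by (rule DERIV_divide[OF d1 d2]) (use p in simp)
  have e: "((6*x^2 + 3) * (3 * (sqrt (1 + x^2))^3) - (x * (2 * x^2 + 3)) * (3 * (of_nat 3 * (sqrt (1 + x^2))^(3 - 1) * (inverse (sqrt (1 + x^2)) / 2 * (2*x)))))
       / ((3 * (sqrt (1 + x^2))^3) * (3 * (sqrt (1 + x^2))^3)) = (1 / sqrt (1 + x^2))^5"
  proof -
    have "((6*x^2 + 3) * (3 * w^3) - (x * (2 * x^2 + 3)) * (3 * (of_nat 3 * w^(3 - 1) * (inverse w / 2 * (2*x)))))
       = 3 * w * ((6*x^2 + 3) * w^2 - 3 * x * (x * (2 * x^2 + 3)))"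
      using w(1) by (simp add: field_simps power2_eq_square power3_eq_cube)
    also have "(6*x^2 + 3) * w^2 - 3 * x * (x * (2 * x^2 + 3)) = 3" unfolding w(2) by (simp add: algebra_simps power2_eq_square)
    finally have "((6*x^2 + 3) * (3 * w^3) - (x * (2 * x^2 + 3)) * (3 * (of_nat 3 * w^(3 - 1) * (inverse w / 2 * (2*x))))) / ((3 * w^3) * (3 * w^3)) = 9 * w / (9 * w^6)"
      by (simp add: power_add[symmetric])
    also have "\<dots> = (1/w)^5" using w(1) by (simp add: field_simps eval_nat_numeral)
    finally show ?thesis unfolding w_def .
  qed
  show ?thesis using d unfolding e .
qed

lemma FTC_5:
  "(\<integral>\<^sup>+s. ennreal ((1 / sqrt (1 + s^2))^5) * indicator {0..} s \<partial>lborel) = ennreal (2/3)"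
proof -
  define F :: "real \<Rightarrow> real" where "F = (\<lambda>y. y * (2 * y^2 + 3) / (3 * (sqrt (1 + y^2))^3))"
  have D: "DERIV F x :> (1 / sqrt (1 + x^2))^5" for x unfolding F_def by (rule DERIV_F5)
  have lim: "(F \<longlongrightarrow> 2/3) at_top" unfolding F_def by real_asymp
  have "(\<integral>\<^sup>+s. ennreal ((1 / sqrt (1 + s^2))^5) * indicator {0..} s \<partial>lborel) = 2/3 - F 0"
    by (rule nn_integral_FTC_atLeast[OF _ D _ lim]) (auto intro!: borel_measurable_continuous_onI continuous_intros simp: add_pos_nonneg)
  then show ?thesis by (simp add: F_def)
qed

lemma vec_nth_meas[measurable]: "(\<lambda>y::real^'n. y$j) \<in> borel_measurable borel"
  by (intro borel_measurable_continuous_onI continuous_intros)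

lemma Basis_vec_real: "(Basis :: (real^'n) set) = (\<lambda>i. axis i 1) ` UNIV"
  unfolding Basis_vec_def by auto

lemma nn_integral_prod_vec:
  fixes f :: "'n::finite \<Rightarrow> real \<Rightarrow> real"
  assumes meas: "\<And>i. f i \<in> borel_measurable borel" and nn: "\<And>i x. 0 \<le> f i x"
  shows "(\<integral>\<^sup>+y. ennreal (\<Prod>i\<in>UNIV. f i (y$i)) \<partial>(lborel::(real^'n) measure)) = (\<Prod>i\<in>UNIV. \<integral>\<^sup>+x. ennreal (f i x) \<partial>lborel)"
proof -
  define idx :: "real^'n \<Rightarrow> 'n" where "idx b = (SOME i. b = axis i 1)" for b
  have idx: "idx (axis i 1) = i" for i unfolding idx_def by (rule some_equality) (auto simp: axis_eq_axis)
  define g where "g b x = ennreal (f (idx b) x)" for b x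
  have inj: "inj (\<lambda>i::'n. axis i (1::real))" by (auto simp: inj_def axis_eq_axis)
  have "(\<integral>\<^sup>+y. (\<Prod>b\<in>Basis. g b (y \<bullet> b)) \<partial>(lborel::(real^'n) measure)) = (\<Prod>b\<in>Basis. \<integral>\<^sup>+x. g b x \<partial>lborel)"
  proof (rule nn_integral_lborel_prod)
    fix b :: "real^'n"
    note [measurable] = meas
    show "g b \<in> borel_measurable borel" unfolding g_def by measurable
  qed (simp add: g_def)
  moreover have "(\<Prod>b\<in>Basis. g b (y \<bullet> b)) = ennreal (\<Prod>i\<in>UNIV. f i (y$i))" for y :: "real^'n"
    unfolding Basis_vec_real prod.reindex[OF inj_on_subset[OF inj subset_UNIV]]
    by (simp add: g_def idx inner_axis prod_ennreal nn)
  moreover have gax: "g (axis i 1) = (\<lambda>x. ennreal (f i x))" for i by (simp add: g_def idx fun_eq_iff)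
  moreover have "(\<Prod>b\<in>Basis. \<integral>\<^sup>+x. g b x \<partial>lborel) = (\<Prod>i\<in>UNIV. \<integral>\<^sup>+x. ennreal (f i x) \<partial>lborel)"
    unfolding Basis_vec_real prod.reindex[OF inj_on_subset[OF inj subset_UNIV]]
    by (simp add: gax)
  ultimately show ?thesis by simp
qed

lemma lborel_orth3:
  fixes f :: "real^3 \<Rightarrow> real^3"
  assumes f: "orthogonal_transformation f"
  shows "distr lborel borel f = lborel"
proof (rule lborel_eqI[symmetric])
  have lin: "linear f" using f by (rule orthogonal_transformation_linear)
  have fm: "f \<in> borel_measurable borel"
    using lin by (intro borel_measurable_continuous_onI linear_continuous_on) (simp add: linear_conv_bounded_linear)
  fix l u :: "real^3" assume le: "\<And>b. b\<in>Basis \<Longrightarrow> l \<bullet> b \<le> u \<bullet> b"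
  define g where "g = inv f"
  have g: "orthogonal_transformation g" using orthogonal_transformation_inv f g_def by blast
  have pre: "f -` box l u = g ` box l u"
    using orthogonal_transformation_bij[OF f] bij_vimage_eq_inv_image g_def by blast
  have bs: "f -` box l u \<in> sets borel" using fm by (simp add: measurable_sets_borel)
  have lm: "g ` box l u \<in> lmeasurable" by (rule measurable_orthogonal_image[OF g]) simp
  have "emeasure (distr lborel borel f) (box l u) = emeasure lborel (f -` box l u)"
    using fm by (simp add: emeasure_distr)
  also have "\<dots> = emeasure lebesgue (g ` box l u)" using bs pre by simp
  also have "\<dots> = ennreal (measure lebesgue (g ` box l u))"
    using lm by (intro emeasure_eq_ennreal_measure) (auto simp: fmeasurable_def)
  also have "\<dots> = ennreal (measure lebesgue (box l u))" using measure_orthogonal_image[OF g] by simp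
  also have "\<dots> = ennreal (measure lborel (box l u))" by simp
  also have "\<dots> = ennreal (\<Prod>b\<in>Basis. (u - l) \<bullet> b)" using le by (simp add: measure_lborel_box_eq)
  finally show "emeasure (distr lborel borel f) (box l u) = (\<Prod>b\<in>Basis. (u - l) \<bullet> b)" .
qed simp

lemma nn_integral_orth3:
  fixes f :: "real^3 \<Rightarrow> real^3"
  assumes f: "orthogonal_transformation f" and h: "h \<in> borel_measurable borel"
  shows "(\<integral>\<^sup>+y. h y \<partial>lborel) = (\<integral>\<^sup>+y. h (f y) \<partial>lborel)"
proof -
  have lin: "linear f" using f by (rule orthogonal_transformation_linear)
  have fm: "f \<in> borel_measurable borel"
    using lin by (intro borel_measurable_continuous_onI linear_continuous_on) (simp add: linear_conv_bounded_linear)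
  have "(\<integral>\<^sup>+y. h y \<partial>lborel) = (\<integral>\<^sup>+y. h y \<partial>distr lborel borel f)" by (simp add: lborel_orth3[OF f])
  also have "\<dots> = (\<integral>\<^sup>+y. h (f y) \<partial>lborel)" using fm h by (simp add: nn_integral_distr)
  finally show ?thesis .
qed

definition G3 :: "real^3 \<Rightarrow> real" where "G3 y = (\<Prod>j\<in>UNIV. std_normal_density (y$j))"

lemma G3_nonneg: "0 \<le> G3 y" unfolding G3_def by (simp add: prod_nonneg)

lemma G3_meas[measurable]: "G3 \<in> borel_measurable borel" unfolding G3_def by measurable

lemma G3_radial: "G3 y = (1 / sqrt (2*pi))^3 * exp (- (norm y)\<^sup>2 / 2)"
proof -
  have n: "(norm y)^2 = (\<Sum>j\<in>UNIV. (y$j)^2)" unfolding power2_norm_eq_inner inner_vec_def by (simp add: power2_eq_square)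
  have e: "exp (- (\<Sum>j\<in>UNIV. (y$j)^2) / 2) = (\<Prod>j\<in>UNIV. exp (-((y$j)^2/2)))"
    by (simp add: sum_divide_distrib[symmetric] exp_sum[symmetric] sum_negf)
  show ?thesis unfolding G3_def normal_density_def n e
    by (simp add: prod_dividef power_one_over)
qed

lemma G3_orth: "orthogonal_transformation f \<Longrightarrow> G3 (f y) = G3 y"
  unfolding G3_radial by (simp add: orthogonal_transformation_norm)

lemma gauss_abs_coord3: "(\<integral>\<^sup>+y. ennreal (G3 y * \<bar>y$3\<bar>) \<partial>lborel) = ennreal (sqrt (2/pi))"
proof -
  define h where "h i x = std_normal_density x * (if i = 3 then \<bar>x\<bar> else 1)" for i :: 3 and x :: real
  have "G3 y * \<bar>y$3\<bar> = (\<Prod>i\<in>UNIV. h i (y$i))" for y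
    unfolding G3_def h_def prod.distrib by (simp add: prod.delta)
  then have "(\<integral>\<^sup>+y. ennreal (G3 y * \<bar>y$3\<bar>) \<partial>lborel) = (\<integral>\<^sup>+y. ennreal (\<Prod>i\<in>UNIV. h i (y$i)) \<partial>lborel)"
    by simp
  also have "\<dots> = (\<Prod>i\<in>UNIV. \<integral>\<^sup>+x. ennreal (h i x) \<partial>lborel)"
  proof (rule nn_integral_prod_vec)
    fix i show "h i \<in> borel_measurable borel" unfolding h_def by measurable
  qed (simp add: h_def)
  also have "\<dots> = ennreal (sqrt (2/pi))"
    unfolding UNIV_3 by (simp add: h_def gauss_1d_abs gauss_1d_one)
  finally show ?thesis .
qed

lemma inv_norm_rep:
  fixes y :: "real^3" assumes y: "y \<noteq> 0"
  shows "ennreal (1 / norm y) = ennreal (sqrt (2/pi)) * (\<integral>\<^sup>+s. ennreal (indicator {0..} s * exp (-(s * norm y)\<^sup>2/2)) \<partial>lborel)"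
proof -
  have n: "norm y > 0" using y by simp
  have "ennreal (sqrt (2/pi)) * (\<integral>\<^sup>+s. ennreal (indicator {0..} s * exp (-(s * norm y)\<^sup>2/2)) \<partial>lborel)
      = ennreal (sqrt (2/pi)) * ennreal (sqrt (pi/2) / norm y)" using inv_rep[OF n] by simp
  also have "\<dots> = ennreal (sqrt (2/pi) * (sqrt (pi/2) / norm y))"
    using ennreal_mult[of "sqrt (2/pi)" "sqrt (pi/2) / norm y"] n by simp
  also have "sqrt (2/pi) * (sqrt (pi/2) / norm y) = 1 / norm y"
    by (simp add: real_sqrt_mult[symmetric])
  finally show ?thesis by simp
qed

lemma G3_prod_s:
  fixes y :: "real^3"
  shows "G3 y * (y$j)\<^sup>2 * exp (-(s * norm y)\<^sup>2/2) =
    (\<Prod>i\<in>UNIV. std_normal_density (y$i) * exp (-(s * y$i)\<^sup>2/2) * (if i = j then (y$i)\<^sup>2 else 1))"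
proof -
  have n: "(s * norm y)\<^sup>2 = (\<Sum>i\<in>UNIV. (s * y$i)\<^sup>2)"
    unfolding power_mult_distrib power2_norm_eq_inner inner_vec_def by (simp add: sum_distrib_left power2_eq_square)
  have e: "exp (-(\<Sum>i\<in>UNIV. (s * y$i)\<^sup>2)/2) = (\<Prod>i\<in>UNIV. exp (-(s * y$i)\<^sup>2/2))"
    by (simp add: sum_divide_distrib[symmetric] exp_sum[symmetric] sum_negf)
  have p: "(\<Prod>i\<in>UNIV. (if i = j then (y$i)\<^sup>2 else 1)) = (y$j)\<^sup>2" by (simp add: prod.delta)
  show ?thesis unfolding n e G3_def prod.distrib p by (simp add: mult_ac)
qed

lemma gauss_y2_exp:
  fixes j :: 3
  shows "(\<integral>\<^sup>+y. ennreal (G3 y * (y$j)\<^sup>2 * exp (-(s * norm y)\<^sup>2/2)) \<partial>lborel) = ennreal ((1 / sqrt (1 + s^2))^5)"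
proof -
  define h where "h i x = std_normal_density x * exp (-(s * x)\<^sup>2/2) * (if i = j then x\<^sup>2 else 1)" for i :: 3 and x :: real
  have "(\<integral>\<^sup>+y. ennreal (G3 y * (y$j)\<^sup>2 * exp (-(s * norm y)\<^sup>2/2)) \<partial>lborel) = (\<integral>\<^sup>+y. ennreal (\<Prod>i\<in>UNIV. h i (y$i)) \<partial>lborel)"
    unfolding G3_prod_s h_def by (simp add: if_distrib[where f="\<lambda>x. _ * x"] cong: if_cong)
  also have "\<dots> = (\<Prod>i\<in>UNIV. \<integral>\<^sup>+x. ennreal (h i x) \<partial>lborel)"
  proof (rule nn_integral_prod_vec)
    fix i show "h i \<in> borel_measurable borel" unfolding h_def by measurable
  qed (simp add: h_def)
  also have "\<dots> = (\<Prod>i\<in>UNIV. ennreal (if i = j then (1 / sqrt (1 + s\<^sup>2))^3 else 1 / sqrt (1 + s\<^sup>2)))"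
    by (intro prod.cong refl) (use gauss_1d_0[of s] gauss_1d_2[of s] in \<open>auto simp: h_def\<close>)
  also have "\<dots> = ennreal (\<Prod>i\<in>UNIV. (if i = j then (1 / sqrt (1 + s\<^sup>2))^3 else 1 / sqrt (1 + s\<^sup>2)))"
    by (simp add: prod_ennreal)
  also have "(\<Prod>i\<in>UNIV. (if i = j then (1 / sqrt (1 + s\<^sup>2))^3 else 1 / sqrt (1 + s\<^sup>2))) = (1 / sqrt (1 + s^2))^5"
  proof -
    define a where "a = 1 / sqrt (1 + s\<^sup>2)"
    have "(\<Prod>i\<in>UNIV. (if i = j then a^3 else a)) = (\<Prod>i\<in>UNIV. a * (if i = j then a^2 else 1))"
      by (intro prod.cong refl) (simp add: power3_eq_cube power2_eq_square)
    also have "\<dots> = a^3 * a^2" by (simp add: prod.distrib prod.delta)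
    also have "\<dots> = a^5" by (simp add: power_add[symmetric])
    finally show ?thesis unfolding a_def .
  qed
  finally show ?thesis .
qed

lemma gauss_y2_over_norm:
  fixes j :: 3
  shows "(\<integral>\<^sup>+y. ennreal (G3 y * (y$j)\<^sup>2 / norm y) \<partial>lborel) = ennreal (2/3 * sqrt (2/pi))"
proof -
  define H where "H y s = ennreal (sqrt (2/pi) * (G3 y * (y$j)\<^sup>2) * (indicator {0..} s * exp (-(s * norm y)\<^sup>2/2)))" for y :: "real^3" and s :: real
  have pt: "ennreal (G3 y * (y$j)\<^sup>2 / norm y) = (\<integral>\<^sup>+s. H y s \<partial>lborel)" for y
  proof (cases "y = 0")
    case True then show ?thesis by (simp add: H_def)
  next
    case False
    have "(\<integral>\<^sup>+s. H y s \<partial>lborel) = (\<integral>\<^sup>+s. ennreal (sqrt (2/pi) * (G3 y * (y$j)\<^sup>2)) * ennreal (indicator {0..} s * exp (-(s * norm y)\<^sup>2/2)) \<partial>lborel)"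
      unfolding H_def by (intro nn_integral_cong) (simp add: ennreal_mult G3_nonneg)
    also have "\<dots> = ennreal (sqrt (2/pi) * (G3 y * (y$j)\<^sup>2)) * (\<integral>\<^sup>+s. ennreal (indicator {0..} s * exp (-(s * norm y)\<^sup>2/2)) \<partial>lborel)"
      by (rule nn_integral_cmult) measurable
    also have "\<dots> = ennreal (G3 y * (y$j)\<^sup>2) * (ennreal (sqrt (2/pi)) * (\<integral>\<^sup>+s. ennreal (indicator {0..} s * exp (-(s * norm y)\<^sup>2/2)) \<partial>lborel))"
      by (simp add: ennreal_mult G3_nonneg mult_ac)
    also have "\<dots> = ennreal (G3 y * (y$j)\<^sup>2) * ennreal (1 / norm y)" unfolding inv_norm_rep[OF False] ..
    also have "\<dots> = ennreal (G3 y * (y$j)\<^sup>2 / norm y)" by (simp add: ennreal_mult[symmetric] G3_nonneg)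
    finally show ?thesis by simp
  qed
  have ps: "pair_sigma_finite (lborel :: (real^3) measure) (lborel :: real measure)"
    by (simp add: pair_sigma_finite_def sigma_finite_lborel)
  have Hm: "case_prod H \<in> borel_measurable (lborel \<Otimes>\<^sub>M lborel)" unfolding H_def by measurable
  have "(\<integral>\<^sup>+y. ennreal (G3 y * (y$j)\<^sup>2 / norm y) \<partial>lborel) = (\<integral>\<^sup>+y. (\<integral>\<^sup>+s. H y s \<partial>lborel) \<partial>lborel)"
    by (simp add: pt)
  also have "\<dots> = (\<integral>\<^sup>+s. (\<integral>\<^sup>+y. H y s \<partial>lborel) \<partial>lborel)" by (rule pair_sigma_finite.Fubini'[OF ps Hm, symmetric])
  also have "\<dots> = (\<integral>\<^sup>+s. ennreal (sqrt (2/pi)) * (ennreal ((1 / sqrt (1 + s^2))^5) * indicator {0..} s) \<partial>lborel)"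
  proof (intro nn_integral_cong)
    fix s :: real
    have "(\<integral>\<^sup>+y. H y s \<partial>lborel) = (\<integral>\<^sup>+y. ennreal (sqrt (2/pi) * indicator {0..} s) * ennreal (G3 y * (y$j)\<^sup>2 * exp (-(s * norm y)\<^sup>2/2)) \<partial>lborel)"
      unfolding H_def by (intro nn_integral_cong) (simp add: ennreal_mult[symmetric] G3_nonneg mult_ac)
    also have "\<dots> = ennreal (sqrt (2/pi) * indicator {0..} s) * (\<integral>\<^sup>+y. ennreal (G3 y * (y$j)\<^sup>2 * exp (-(s * norm y)\<^sup>2/2)) \<partial>lborel)"
      by (rule nn_integral_cmult) measurable
    also have "\<dots> = ennreal (sqrt (2/pi)) * (ennreal ((1 / sqrt (1 + s^2))^5) * indicator {0..} s)"
      unfolding gauss_y2_exp by (simp add: ennreal_mult indicator_def)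
    finally show "(\<integral>\<^sup>+y. H y s \<partial>lborel) = ennreal (sqrt (2/pi)) * (ennreal ((1 / sqrt (1 + s^2))^5) * indicator {0..} s)" .
  qed
  also have "\<dots> = ennreal (sqrt (2/pi)) * (\<integral>\<^sup>+s. ennreal ((1 / sqrt (1 + s^2))^5) * indicator {0..} s \<partial>lborel)"
    by (rule nn_integral_cmult) measurable
  also have "\<dots> = ennreal (2/3 * sqrt (2/pi))" unfolding FTC_5 by (simp add: ennreal_mult[symmetric] mult.commute)
  finally show ?thesis .
qed

lemma gauss_abs_inner:
  fixes w :: "real^3"
  shows "(\<integral>\<^sup>+y. ennreal (G3 y * \<bar>w \<bullet> y\<bar>) \<partial>lborel) = ennreal (sqrt (2/pi) * norm w)"
proof (cases "w = 0")
  case True then show ?thesis by simp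
next
  case False
  define e :: "real^3" where "e = norm w *\<^sub>R axis 3 1"
  have nw: "norm e = norm w" by (simp add: e_def)
  obtain f where f: "orthogonal_transformation f" and fw: "f e = w"
    using orthogonal_transformation_exists[OF nw] by blast
  have "(\<integral>\<^sup>+y. ennreal (G3 y * \<bar>w \<bullet> y\<bar>) \<partial>lborel) = (\<integral>\<^sup>+y. ennreal (G3 (f y) * \<bar>w \<bullet> f y\<bar>) \<partial>lborel)"
    by (rule nn_integral_orth3[OF f]) measurable
  also have "\<dots> = (\<integral>\<^sup>+y. ennreal (norm w) * ennreal (G3 y * \<bar>y$3\<bar>) \<partial>lborel)"
  proof (intro nn_integral_cong)
    fix y :: "real^3"
    have "w \<bullet> f y = e \<bullet> y" using f fw unfolding orthogonal_transformation_def by metis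
    also have "\<dots> = norm w * y$3" by (simp add: e_def inner_axis')
    finally show "ennreal (G3 (f y) * \<bar>w \<bullet> f y\<bar>) = ennreal (norm w) * ennreal (G3 y * \<bar>y$3\<bar>)"
      by (simp add: G3_orth[OF f] ennreal_mult[symmetric] G3_nonneg abs_mult mult_ac)
  qed
  also have "\<dots> = ennreal (norm w) * ennreal (sqrt (2/pi))"
    by (subst nn_integral_cmult) (auto simp: gauss_abs_coord3)
  also have "\<dots> = ennreal (sqrt (2/pi) * norm w)" by (simp add: ennreal_mult[symmetric] mult.commute)
  finally show ?thesis .
qed

definition sgnflip :: "real^3 \<Rightarrow> real^3 \<Rightarrow> real^3" where
  "sgnflip t x = (\<chi> j. (if 0 \<le> t$j then 1 else -1) * x$j)"

lemma sgnflip_norm: "norm (sgnflip t x) = norm x"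
proof -
  have "(norm (sgnflip t x))\<^sup>2 = (norm x)\<^sup>2"
    unfolding power2_norm_eq_inner inner_vec_def sgnflip_def by (intro sum.cong refl) auto
  then show ?thesis by (simp add: power2_eq_iff_nonneg)
qed

lemma sgnflip_inner: "sgnflip t a \<bullet> b = a \<bullet> sgnflip t b"
  unfolding inner_vec_def sgnflip_def by (simp add: mult_ac)

lemma sgnflip_t: "(\<Sum>j\<in>UNIV. t$j * u$j * sgnflip t u $ j) = (\<Sum>j\<in>UNIV. \<bar>t$j\<bar> * (u$j)\<^sup>2)"
  unfolding sgnflip_def by (intro sum.cong refl) (auto simp: power2_eq_square)

lemma pmf_int_bdd:
  fixes f :: "'l \<Rightarrow> real"
  assumes "\<And>l. \<bar>f l\<bar> \<le> B"
  shows "integrable (measure_pmf P) f"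
  by (rule measure_pmf.integrable_const_bound[where B=B]) (use assms in auto)

lemma pointwise_bound:
  fixes t :: "real^3" and P :: "'l pmf" and A :: "'l \<Rightarrow> real^3 \<Rightarrow> real" and r :: "'l \<Rightarrow> real^3"
  assumes A: "\<forall>l u. norm u = 1 \<longrightarrow> \<bar>A l u\<bar> \<le> 1" and r: "\<forall>l. norm (r l) \<le> 1"
    and C: "\<forall>u v. norm u = 1 \<longrightarrow> norm v = 1 \<longrightarrow> (\<Sum>j\<in>UNIV. t$j * u$j * v$j) = measure_pmf.expectation P (\<lambda>l. A l u * (r l \<bullet> v))"
  shows "(\<Sum>j\<in>UNIV. \<bar>t$j\<bar> * ((y$j)\<^sup>2 / norm y)) \<le> measure_pmf.expectation P (\<lambda>l. \<bar>sgnflip t (r l) \<bullet> y\<bar>)"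
proof (cases "y = 0")
  case True then show ?thesis by simp
next
  case False
  define n where "n = norm y"
  have n: "n > 0" using False n_def by simp
  define u where "u = (1/n) *\<^sub>R y"
  have nu: "norm u = 1" using n by (simp add: u_def n_def)
  have yu: "y = n *\<^sub>R u" using n by (simp add: u_def)
  have nv: "norm (sgnflip t u) = 1" using nu sgnflip_norm by simp
  have "(\<Sum>j\<in>UNIV. \<bar>t$j\<bar> * ((y$j)\<^sup>2 / norm y)) = n * (\<Sum>j\<in>UNIV. \<bar>t$j\<bar> * (u$j)\<^sup>2)"
    unfolding n_def[symmetric] yu using n nu by (simp add: sum_distrib_left power2_eq_square field_simps)
  also have "(\<Sum>j\<in>UNIV. \<bar>t$j\<bar> * (u$j)\<^sup>2) = measure_pmf.expectation P (\<lambda>l. A l u * (r l \<bullet> sgnflip t u))"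
  proof -
    have "(\<Sum>j\<in>UNIV. t$j * u$j * sgnflip t u $ j) = measure_pmf.expectation P (\<lambda>l. A l u * (r l \<bullet> sgnflip t u))"
      using C nu nv by blast
    then show ?thesis unfolding sgnflip_t .
  qed
  also have "\<dots> \<le> measure_pmf.expectation P (\<lambda>l. \<bar>sgnflip t (r l) \<bullet> u\<bar>)"
  proof (rule integral_mono)
    have ip: "\<bar>r l \<bullet> sgnflip t u\<bar> \<le> 1" for l
    proof -
      have "norm (r l) * norm (sgnflip t u) \<le> 1" using r nv by simp
      then show ?thesis using Cauchy_Schwarz_ineq2[of "r l" "sgnflip t u"] by simp
    qed
    show "integrable (measure_pmf P) (\<lambda>l. A l u * (r l \<bullet> sgnflip t u))"
      by (rule pmf_int_bdd[where B=1]) (use A nu ip in \<open>auto simp: abs_mult intro: mult_le_one\<close>)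
    show "integrable (measure_pmf P) (\<lambda>l. \<bar>sgnflip t (r l) \<bullet> u\<bar>)"
      by (rule pmf_int_bdd[where B=1]) (use ip in \<open>simp add: sgnflip_inner\<close>)
    fix l
    have "A l u * (r l \<bullet> sgnflip t u) \<le> \<bar>A l u\<bar> * \<bar>r l \<bullet> sgnflip t u\<bar>" by (simp add: abs_mult[symmetric])
    also have "\<dots> \<le> 1 * \<bar>r l \<bullet> sgnflip t u\<bar>" using A nu by (intro mult_right_mono) auto
    finally show "A l u * (r l \<bullet> sgnflip t u) \<le> \<bar>sgnflip t (r l) \<bullet> u\<bar>" by (simp add: sgnflip_inner)
  qed
  finally have "(\<Sum>j\<in>UNIV. \<bar>t$j\<bar> * ((y$j)\<^sup>2 / norm y)) \<le> n * measure_pmf.expectation P (\<lambda>l. \<bar>sgnflip t (r l) \<bullet> u\<bar>)"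
    using n by (simp add: mult_left_mono)
  also have "\<dots> = measure_pmf.expectation P (\<lambda>l. n * \<bar>sgnflip t (r l) \<bullet> u\<bar>)" by simp
  also have "\<dots> = measure_pmf.expectation P (\<lambda>l. \<bar>sgnflip t (r l) \<bullet> y\<bar>)"
    unfolding yu using n by (simp add: abs_mult)
  finally show ?thesis .
qed

lemma steer_bound:
  fixes t :: "real^3" and P :: "'l pmf" and A :: "'l \<Rightarrow> real^3 \<Rightarrow> real" and r :: "'l \<Rightarrow> real^3"
  assumes A: "\<forall>l u. norm u = 1 \<longrightarrow> \<bar>A l u\<bar> \<le> 1" and r: "\<forall>l. norm (r l) \<le> 1"
    and C: "\<forall>u v. norm u = 1 \<longrightarrow> norm v = 1 \<longrightarrow> (\<Sum>j\<in>UNIV. t$j * u$j * v$j) = measure_pmf.expectation P (\<lambda>l. A l u * (r l \<bullet> v))"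
  shows "(\<Sum>j\<in>UNIV. \<bar>t$j\<bar>) \<le> 3/2"
proof -
  define w where "w l = sgnflip t (r l)" for l
  have wn: "norm (w l) \<le> 1" for l using r sgnflip_norm w_def by simp
  define H where "H y = measure_pmf.expectation P (\<lambda>l. \<bar>w l \<bullet> y\<bar>)" for y :: "real^3"
  have pb: "(\<Sum>j\<in>UNIV. \<bar>t$j\<bar> * ((y$j)\<^sup>2 / norm y)) \<le> H y" for y
    unfolding H_def w_def by (rule pointwise_bound[OF A r C])
  have Hint: "ennreal (G3 y * H y) = (\<integral>\<^sup>+l. ennreal (G3 y * \<bar>w l \<bullet> y\<bar>) \<partial>measure_pmf P)" for y
  proof -
    have bd: "\<bar>w l \<bullet> y\<bar> \<le> norm y" for l
    proof -
      have "norm (w l) * norm y \<le> 1 * norm y" by (rule mult_right_mono[OF wn]) simp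
      then show ?thesis using Cauchy_Schwarz_ineq2[of "w l" y] by simp
    qed
    have "ennreal (G3 y * H y) = ennreal (measure_pmf.expectation P (\<lambda>l. G3 y * \<bar>w l \<bullet> y\<bar>))"
      unfolding H_def by simp
    also have "\<dots> = (\<integral>\<^sup>+l. ennreal (G3 y * \<bar>w l \<bullet> y\<bar>) \<partial>measure_pmf P)"
    proof (rule nn_integral_eq_integral[symmetric])
      show "integrable (measure_pmf P) (\<lambda>l. G3 y * \<bar>w l \<bullet> y\<bar>)"
        by (rule pmf_int_bdd[where B="G3 y * norm y"]) (use bd G3_nonneg in \<open>auto simp: abs_mult intro: mult_left_mono\<close>)
    qed (simp add: G3_nonneg)
    finally show ?thesis .
  qed
  have ps: "pair_sigma_finite (lborel :: (real^3) measure) (measure_pmf P)"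
    unfolding pair_sigma_finite_def using sigma_finite_lborel measure_pmf.sigma_finite_measure_axioms by blast
  have wm[measurable]: "(\<lambda>l. w l $ j) \<in> borel_measurable (measure_pmf P)" for j by simp
  have Fm: "(\<lambda>(y, l). ennreal (G3 y * \<bar>w l \<bullet> y\<bar>)) \<in> borel_measurable (lborel \<Otimes>\<^sub>M measure_pmf P)"
    unfolding inner_vec_def by measurable
  have "(\<Sum>j\<in>UNIV. ennreal \<bar>t$j\<bar> * ennreal (2/3 * sqrt (2/pi))) = (\<Sum>j\<in>UNIV. ennreal (\<bar>t$j\<bar> * (2/3 * sqrt (2/pi))))"
    by (intro sum.cong refl, rule ennreal_mult[symmetric]) auto
  also have "\<dots> = ennreal (\<Sum>j\<in>UNIV. \<bar>t$j\<bar> * (2/3 * sqrt (2/pi)))" by (rule sum_ennreal) simp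
  also have "\<dots> = ennreal ((\<Sum>j\<in>UNIV. \<bar>t$j\<bar>) * (2/3 * sqrt (2/pi)))" by (simp add: sum_distrib_right sum_divide_distrib)
  finally have "ennreal ((\<Sum>j\<in>UNIV. \<bar>t$j\<bar>) * (2/3 * sqrt (2/pi))) = (\<Sum>j\<in>UNIV. ennreal \<bar>t$j\<bar> * ennreal (2/3 * sqrt (2/pi)))" ..
  also have "\<dots> = (\<Sum>j\<in>UNIV. ennreal \<bar>t$j\<bar> * (\<integral>\<^sup>+y. ennreal (G3 y * (y$j)\<^sup>2 / norm y) \<partial>lborel))"
    by (simp add: gauss_y2_over_norm)
  also have "\<dots> = (\<Sum>j\<in>UNIV. (\<integral>\<^sup>+y. ennreal (\<bar>t$j\<bar> * (G3 y * (y$j)\<^sup>2 / norm y)) \<partial>lborel))"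
    by (intro sum.cong refl, subst nn_integral_cmult[symmetric]) (auto intro!: nn_integral_cong simp: ennreal_mult[symmetric] G3_nonneg)
  also have "\<dots> = (\<integral>\<^sup>+y. (\<Sum>j\<in>UNIV. ennreal (\<bar>t$j\<bar> * (G3 y * (y$j)\<^sup>2 / norm y))) \<partial>lborel)"
    by (rule nn_integral_sum[symmetric]) measurable
  also have "\<dots> = (\<integral>\<^sup>+y. ennreal (G3 y * (\<Sum>j\<in>UNIV. \<bar>t$j\<bar> * ((y$j)\<^sup>2 / norm y))) \<partial>lborel)"
    by (intro nn_integral_cong) (simp add: sum_ennreal G3_nonneg sum_distrib_left mult_ac)
  also have "\<dots> \<le> (\<integral>\<^sup>+y. ennreal (G3 y * H y) \<partial>lborel)"
    by (intro nn_integral_mono ennreal_leI mult_left_mono pb G3_nonneg)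
  also have "\<dots> = (\<integral>\<^sup>+y. (\<integral>\<^sup>+l. ennreal (G3 y * \<bar>w l \<bullet> y\<bar>) \<partial>measure_pmf P) \<partial>lborel)"
    by (simp add: Hint)
  also have "\<dots> = (\<integral>\<^sup>+l. (\<integral>\<^sup>+y. ennreal (G3 y * \<bar>w l \<bullet> y\<bar>) \<partial>lborel) \<partial>measure_pmf P)"
    by (rule pair_sigma_finite.Fubini'[OF ps Fm, symmetric])
  also have "\<dots> = (\<integral>\<^sup>+l. ennreal (sqrt (2/pi) * norm (w l)) \<partial>measure_pmf P)"
    by (simp add: gauss_abs_inner)
  also have "\<dots> \<le> (\<integral>\<^sup>+l. ennreal (sqrt (2/pi)) \<partial>measure_pmf P)"
    by (intro nn_integral_mono ennreal_leI) (use wn in \<open>auto intro: mult_left_le\<close>)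
  also have "\<dots> = ennreal (sqrt (2/pi))" by (simp add: measure_pmf.emeasure_space_1)
  finally have "(\<Sum>j\<in>UNIV. \<bar>t$j\<bar>) * (2/3 * sqrt (2/pi)) \<le> sqrt (2/pi)"
    by (simp add: ennreal_le_iff)
  moreover have "sqrt (2/pi) > 0" by simp
  ultimately show ?thesis by (simp add: field_simps)
qed

theorem mainTheorem6:
  fixes t :: "real^3"
  assumes "density_op (T_state t)"
    and "(\<Sum>j\<in>UNIV. \<bar>t$j\<bar>) > 3/2"
  shows "\<not> LHS_Bob TYPE('l) (T_state t) \<and> \<not> LHS_Alice TYPE('l) (T_state t)"
proof
  show "\<not> LHS_Bob TYPE('l) (T_state t)"
  proof
    assume "LHS_Bob TYPE('l) (T_state t)"
    then obtain P :: "'l pmf" and A r where "\<forall>l u. norm u = 1 \<longrightarrow> \<bar>A l u\<bar> \<le> 1" "\<forall>l. norm (r l) \<le> 1"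
      "\<forall>u v. norm u = 1 \<longrightarrow> norm v = 1 \<longrightarrow> (\<Sum>j\<in>UNIV. t$j * u$j * v$j) = measure_pmf.expectation P (\<lambda>l. A l u * (r l \<bullet> v))"
      using LHS_Bob_corr by blast
    then have "(\<Sum>j\<in>UNIV. \<bar>t$j\<bar>) \<le> 3/2" by (rule steer_bound)
    then show False using assms(2) by simp
  qed
  show "\<not> LHS_Alice TYPE('l) (T_state t)"
  proof
    assume "LHS_Alice TYPE('l) (T_state t)"
    then obtain P :: "'l pmf" and A r where "\<forall>l u. norm u = 1 \<longrightarrow> \<bar>A l u\<bar> \<le> 1" "\<forall>l. norm (r l) \<le> 1"
      "\<forall>u v. norm u = 1 \<longrightarrow> norm v = 1 \<longrightarrow> (\<Sum>j\<in>UNIV. t$j * u$j * v$j) = measure_pmf.expectation P (\<lambda>l. A l u * (r l \<bullet> v))"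
      using LHS_Alice_corr by blast
    then have "(\<Sum>j\<in>UNIV. \<bar>t$j\<bar>) \<le> 3/2" by (rule steer_bound)
    then show False using assms(2) by simp
  qed
qed

end
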